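(* With the notation of the context, let $\bm c$ be an integer vector and $\bm p\in\mathbb{Z}_\omega^{2n}$ a profile. There exists a sequence compatible with $\bm p$ for $\bm c$ if and only if there are integer vectors $\bm a_0,\bm a$ with $\bm a\neq\bm 0$ such that: (1) for every $i$ with $p_{2i-1}\in\mathbb{Z}$: $\bm r_i^\top\bm a_0\le p_{2i-1}$ and $\bm r_i^\top\bm a\le 0$; (2) for every $i$ with $p_{2i}\in\mathbb{Z}$: $p_{2i}\le\bm s_i^\top\bm a_0+\bm t_i^\top\bm c+h_i$ and $\bm s_i^\top\bm a\ge0$; (3) for every $i$ with $p_{2i}=\omega$: $\bm s_i^\top\bm a>0$; (4) for every $j\in[1,m]$: $\bm u_j^\top\bm a_0\approx^j_{e_j}\bm v_j^\top(\bm a_0+\bm a)+\bm w_j^\top\bm c+d_j$, $\bm u_j^\top\bm a\equiv_{e_j}0$ and $\bm v_j^\top\bm a\equiv_{e_j}0$.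
   Context: Fixed data: integer vectors $\bm r_i,\bm s_i,\bm t_i$ and $h_i\in\mathbb{Z}$ for $i\in[1,n]$; integer vectors $\bm u_j,\bm v_j,\bm w_j$, $d_j\in\mathbb{Z}$, $e_j>0$ and relations $\approx^j_{e_j}\in\{\equiv_{e_j},\not\equiv_{e_j}\}$ for $j\in[1,m]$ ($s\equiv_e t$ means $e\mid s-t$). $\mathbb{Z}_\omega=\mathbb{Z}\cup\{\omega\}$, $\omega$ above all integers. A profile is $\bm p=(p_1,\dots,p_{2n})\in\mathbb{Z}_\omega^{2n}$. A sequence of pairwise distinct integer vectors $\bm a_1,\bm a_2,\dots$ is compatible with $\bm p$ for $\bm c$ if for all $k<\ell$ and $j$, $\bm u_j^\top\bm a_k\approx^j_{e_j}\bm v_j^\top\bm a_\ell+\bm w_j^\top\bm c+d_j$, and for all $i$, $\sup_k\bm r_i^\top\bm a_k\le p_{2i-1}$ and $p_{2i}\le\liminf_k(\bm s_i^\top\bm a_k+\bm t_i^\top\bm c+h_i)$ (value $+\infty$ identified with $\omega$). *)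

theory Defs
  imports Main "HOL-Library.Extended_Real" "HOL-Library.Liminf_Limsup"
begin

definition dotp :: "('d::finite \<Rightarrow> int) \<Rightarrow> ('d \<Rightarrow> int) \<Rightarrow> int" where
  "dotp x y = (\<Sum>k\<in>UNIV. x k * y k)"

text \<open>Z_omega = Z with a top element omega.\<close>
datatype zomega = Fin int | Omega

fun zo_ereal :: "zomega \<Rightarrow> ereal" where
  "zo_ereal (Fin z) = ereal (real_of_int z)"
| "zo_ereal Omega = \<infinity>"

definition rel_mod :: "bool \<Rightarrow> int \<Rightarrow> int \<Rightarrow> int \<Rightarrow> bool" where
  "rel_mod eq e x y = (if eq then e dvd (x - y) else \<not> e dvd (x - y))"

definition compatible ::
  "nat \<Rightarrow> nat \<Rightarrow> (nat \<Rightarrow> 'd::finite \<Rightarrow> int) \<Rightarrow> (nat \<Rightarrow> 'd \<Rightarrow> int) \<Rightarrow> (nat \<Rightarrow> 'c::finite \<Rightarrow> int)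
   \<Rightarrow> (nat \<Rightarrow> int) \<Rightarrow> (nat \<Rightarrow> 'd \<Rightarrow> int) \<Rightarrow> (nat \<Rightarrow> 'd \<Rightarrow> int) \<Rightarrow> (nat \<Rightarrow> 'c \<Rightarrow> int)
   \<Rightarrow> (nat \<Rightarrow> int) \<Rightarrow> (nat \<Rightarrow> int) \<Rightarrow> (nat \<Rightarrow> bool)
   \<Rightarrow> (nat \<Rightarrow> zomega) \<Rightarrow> ('c \<Rightarrow> int) \<Rightarrow> (nat \<Rightarrow> 'd \<Rightarrow> int) \<Rightarrow> bool" where
  "compatible n m r s t h u v w d e eq p c a \<longleftrightarrow>
     inj a \<and>
     (\<forall>k l j. k < l \<and> j \<in> {1..m} \<longrightarrow>
        rel_mod (eq j) (e j) (dotp (u j) (a k)) (dotp (v j) (a l) + dotp (w j) c + d j)) \<and>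
     (\<forall>i\<in>{1..n}.
        (SUP k. ereal (real_of_int (dotp (r i) (a k)))) \<le> zo_ereal (p (2*i - 1)) \<and>
        zo_ereal (p (2*i)) \<le> liminf (\<lambda>k. ereal (real_of_int (dotp (s i) (a k) + dotp (t i) c + h i))))"

end

theory Submission
  imports Defs "HOL-Library.Infinite_Set"
begin

lemma one_mono:
  fixes f :: "nat \<Rightarrow> int"
  assumes S: "infinite S" and B: "\<forall>k\<in>S. B \<le> f k"
  shows "\<exists>S'\<subseteq>S. infinite S' \<and> (\<forall>k\<in>S'. \<forall>l\<in>S'. k < l \<longrightarrow> f k \<le> f l)"
proof (cases "\<exists>v. infinite {k\<in>S. f k = v}")
  case True
  then obtain v where "infinite {k\<in>S. f k = v}" by blast
  then show ?thesis by (intro exI[of _ "{k\<in>S. f k = v}"]) auto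
next
  case False
  hence fin: "finite {k\<in>S. f k = v}" for v by blast
  define S' where "S' = {l\<in>S. \<forall>k\<in>S. k < l \<longrightarrow> f k < f l}"
  have "\<exists>l>N. l \<in> S'" for N
  proof -
    define M where "M = Max (f ` {k\<in>S. k \<le> N} \<union> {B})"
    have finM: "finite (f ` {k\<in>S. k \<le> N} \<union> {B})" by auto
    have leM: "f k \<le> M" if "k \<in> S" "k \<le> N" for k
      unfolding M_def using that finM by (intro Max_ge) auto
    have "{k\<in>S. f k \<le> M} \<subseteq> (\<Union>v\<in>{B..M}. {k\<in>S. f k = v})" using B by auto
    moreover have "finite (\<Union>v\<in>{B..M}. {k\<in>S. f k = v})" using fin by simp
    ultimately have finle: "finite {k\<in>S. f k \<le> M}" by (rule finite_subset)
    have Seq: "S = {k\<in>S. f k \<le> M} \<union> {k\<in>S. f k > M}" by auto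
    have inf: "infinite {k\<in>S. f k > M}"
    proof
      assume "finite {k\<in>S. f k > M}"
      hence "finite ({k\<in>S. f k \<le> M} \<union> {k\<in>S. f k > M})" using finle by simp
      hence "finite S" using Seq by simp
      thus False using S by simp
    qed
    have ne: "{k\<in>S. f k > M} \<noteq> {}"
    proof
      assume h: "{k\<in>S. f k > M} = {}"
      have "finite {k\<in>S. f k > M}" unfolding h by (rule finite.emptyI)
      thus False using inf by contradiction
    qed
    define l where "l = Least (\<lambda>k. k \<in> S \<and> f k > M)"
    have l: "l \<in> S" "f l > M" using LeastI_ex[of "\<lambda>k. k \<in> S \<and> f k > M"] ne unfolding l_def by auto
    have lN: "l > N"
    proof (rule ccontr)
      assume "\<not> l > N"
      hence "l \<le> N" by simp
      hence "f l \<le> M" using leM l(1) by blast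
      thus False using l(2) by simp
    qed
    have "\<forall>k\<in>S. k < l \<longrightarrow> f k < f l"
    proof (intro ballI impI)
      fix k assume k: "k \<in> S" "k < l"
      have "\<not> f k > M" using not_less_Least[of k "\<lambda>k. k \<in> S \<and> f k > M"] k unfolding l_def by auto
      thus "f k < f l" using l by auto
    qed
    thus ?thesis using l lN unfolding S'_def by auto
  qed
  hence "infinite S'" using infinite_nat_iff_unbounded by blast
  moreover have "S' \<subseteq> S" "\<forall>k\<in>S'. \<forall>l\<in>S'. k < l \<longrightarrow> f k \<le> f l"
    unfolding S'_def by (auto simp: less_imp_le)
  ultimately show ?thesis by blast
qed

lemma multi_mono:
  fixes F :: "(nat \<Rightarrow> int) set" and g :: "nat \<Rightarrow> 'a"
  assumes F: "finite F" and S: "infinite S" and B: "\<forall>f\<in>F. \<exists>B. \<forall>k\<in>S. B \<le> f k"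
    and g: "finite (g ` S)"
  shows "\<exists>S'\<subseteq>S. infinite S' \<and> (\<forall>k\<in>S'. \<forall>l\<in>S'. k < l \<longrightarrow> (\<forall>f\<in>F. f k \<le> f l) \<and> g k = g l)"
  using F B
proof (induction F rule: finite_induct)
  case empty
  obtain a0 where "a0 \<in> S" and inf0: "infinite {a\<in>S. g a = g a0}" using pigeonhole_infinite[OF S g] by blast
  have "\<forall>k\<in>{a\<in>S. g a = g a0}. \<forall>l\<in>{a\<in>S. g a = g a0}. k < l \<longrightarrow> (\<forall>f\<in>{}. f k \<le> f l) \<and> g k = g l"
    by simp
  moreover have "{a\<in>S. g a = g a0} \<subseteq> S" by blast
  ultimately show ?case using inf0 by blast
next
  case (insert f F)
  have "\<forall>f\<in>F. \<exists>B. \<forall>k\<in>S. B \<le> f k" using insert.prems by simp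
  from insert.IH[OF this] obtain S' where S': "S' \<subseteq> S" "infinite S'"
    "\<forall>k\<in>S'. \<forall>l\<in>S'. k < l \<longrightarrow> (\<forall>f\<in>F. f k \<le> f l) \<and> g k = g l" by blast
  obtain Bf where Bf: "\<forall>k\<in>S. Bf \<le> f k" using insert.prems by auto
  have "\<forall>k\<in>S'. Bf \<le> f k" using S'(1) Bf by blast
  from one_mono[OF S'(2) this] obtain S'' where S'': "S'' \<subseteq> S'" "infinite S''"
    "\<forall>k\<in>S''. \<forall>l\<in>S''. k < l \<longrightarrow> f k \<le> f l" by blast
  have "\<forall>k\<in>S''. \<forall>l\<in>S''. k < l \<longrightarrow> (\<forall>f'\<in>insert f F. f' k \<le> f' l) \<and> g k = g l"
  proof (intro ballI impI)
    fix k l assume kl: "k \<in> S''" "l \<in> S''" "k < l"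
    have "f k \<le> f l" using S''(3) kl by blast
    moreover have "(\<forall>f\<in>F. f k \<le> f l) \<and> g k = g l" using S'(3) S''(1) kl by blast
    ultimately show "(\<forall>f'\<in>insert f F. f' k \<le> f' l) \<and> g k = g l" by simp
  qed
  moreover have "S'' \<subseteq> S" using S'(1) S''(1) by blast
  ultimately show ?case using S''(2) by blast
qed

lemma dotp_lin: "dotp x (\<lambda>y. f y + int k * g y) = dotp x f + int k * dotp x g"
  unfolding dotp_def by (simp add: algebra_simps sum.distrib sum_distrib_left)
lemma dotp_add: "dotp x (\<lambda>y. f y + g y) = dotp x f + dotp x g"
  unfolding dotp_def by (simp add: algebra_simps sum.distrib)
lemma dotp_diff: "dotp x (\<lambda>y. f y - g y) = dotp x f - dotp x g"
  unfolding dotp_def by (simp add: algebra_simps sum_subtractf)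

lemma int_half: "real_of_int z - 1/2 < real_of_int x \<Longrightarrow> z \<le> x"
proof -
  assume "real_of_int z - 1/2 < real_of_int x"
  hence "real_of_int z < real_of_int (x + 1)" by simp
  hence "z < x + 1" by (simp only: of_int_less_iff)
  thus ?thesis by simp
qed

theorem mainTheorem9:
  fixes n m :: nat
    and r s :: "nat \<Rightarrow> 'd::finite \<Rightarrow> int" and t :: "nat \<Rightarrow> 'c::finite \<Rightarrow> int" and h :: "nat \<Rightarrow> int"
    and u v :: "nat \<Rightarrow> 'd \<Rightarrow> int" and w :: "nat \<Rightarrow> 'c \<Rightarrow> int" and d e :: "nat \<Rightarrow> int"
    and eq :: "nat \<Rightarrow> bool"
    and p :: "nat \<Rightarrow> zomega" and c :: "'c \<Rightarrow> int"
  assumes e_pos: "\<forall>j\<in>{1..m}. e j > 0"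
  shows "(\<exists>a :: nat \<Rightarrow> 'd \<Rightarrow> int. compatible n m r s t h u v w d e eq p c a) \<longleftrightarrow>
    (\<exists>a0 a :: 'd \<Rightarrow> int. a \<noteq> (\<lambda>_. 0) \<and>
       (\<forall>i\<in>{1..n}. \<forall>z. p (2*i - 1) = Fin z \<longrightarrow> dotp (r i) a0 \<le> z \<and> dotp (r i) a \<le> 0) \<and>
       (\<forall>i\<in>{1..n}. \<forall>z. p (2*i) = Fin z \<longrightarrow>
          z \<le> dotp (s i) a0 + dotp (t i) c + h i \<and> dotp (s i) a \<ge> 0) \<and>
       (\<forall>i\<in>{1..n}. p (2*i) = Omega \<longrightarrow> dotp (s i) a > 0) \<and>
       (\<forall>j\<in>{1..m}.
          rel_mod (eq j) (e j) (dotp (u j) a0) (dotp (v j) (\<lambda>k. a0 k + a k) + dotp (w j) c + d j) \<and>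
          e j dvd dotp (u j) a \<and> e j dvd dotp (v j) a))"
proof
  assume "\<exists>a :: nat \<Rightarrow> 'd \<Rightarrow> int. compatible n m r s t h u v w d e eq p c a"
  then obtain a :: "nat \<Rightarrow> 'd \<Rightarrow> int" where inj: "inj a"
    and md: "\<forall>k l j. k < l \<and> j \<in> {1..m} \<longrightarrow>
        rel_mod (eq j) (e j) (dotp (u j) (a k)) (dotp (v j) (a l) + dotp (w j) c + d j)"
    and lim: "\<forall>i\<in>{1..n}.
        (SUP k. ereal (real_of_int (dotp (r i) (a k)))) \<le> zo_ereal (p (2*i - 1)) \<and>
        zo_ereal (p (2*i)) \<le> liminf (\<lambda>k. ereal (real_of_int (dotp (s i) (a k) + dotp (t i) c + h i)))"
    unfolding compatible_def by blast
  define X where "X i k = dotp (s i) (a k) + dotp (t i) c + h i" for i k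
  have rb: "dotp (r i) (a k) \<le> z" if "i \<in> {1..n}" "p (2*i - 1) = Fin z" for i z k
  proof -
    have "ereal (real_of_int (dotp (r i) (a k))) \<le> (SUP k. ereal (real_of_int (dotp (r i) (a k))))"
      by (rule SUP_upper) auto
    also have "\<dots> \<le> ereal (real_of_int z)" using lim[rule_format, OF that(1)] that(2) by simp
    finally show ?thesis by simp
  qed
  have sb: "eventually (\<lambda>k. z \<le> X i k) sequentially" if "i \<in> {1..n}" "p (2*i) = Fin z" for i z
  proof -
    have "ereal (real_of_int z) \<le> liminf (\<lambda>k. ereal (real_of_int (X i k)))"
      using lim[rule_format, OF that(1)] that(2) unfolding X_def by simp
    hence "\<forall>y<ereal (real_of_int z). eventually (\<lambda>k. y < ereal (real_of_int (X i k))) sequentially"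
      by (simp only: le_Liminf_iff)
    hence "eventually (\<lambda>k. ereal (real_of_int z - 1/2) < ereal (real_of_int (X i k))) sequentially"
      by (erule_tac x="ereal (real_of_int z - 1/2)" in allE) simp
    thus ?thesis by (rule eventually_mono) (auto intro: int_half)
  qed
  have ob: "eventually (\<lambda>k. C < X i k) sequentially" if "i \<in> {1..n}" "p (2*i) = Omega" for i C
  proof -
    have "\<infinity> \<le> liminf (\<lambda>k. ereal (real_of_int (X i k)))"
      using lim[rule_format, OF that(1)] that(2) unfolding X_def by simp
    hence "\<forall>y<\<infinity>. eventually (\<lambda>k. y < ereal (real_of_int (X i k))) sequentially"
      by (simp only: le_Liminf_iff)
    hence "eventually (\<lambda>k. ereal (real_of_int C) < ereal (real_of_int (X i k))) sequentially"
      by (erule_tac x="ereal (real_of_int C)" in allE) simp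
    thus ?thesis by (rule eventually_mono) simp
  qed
  have "eventually (\<lambda>k. \<forall>i\<in>{1..n}. (\<forall>z. p (2*i) = Fin z \<longrightarrow> z \<le> X i k) \<and> (p (2*i) = Omega \<longrightarrow> 0 < X i k)) sequentially"
  proof (rule eventually_ball_finite, simp, intro ballI)
    fix i assume i: "i \<in> {1..n}"
    show "eventually (\<lambda>k. (\<forall>z. p (2*i) = Fin z \<longrightarrow> z \<le> X i k) \<and> (p (2*i) = Omega \<longrightarrow> 0 < X i k)) sequentially"
    proof (cases "p (2*i)")
      case (Fin z)
      show ?thesis using sb[OF i Fin] by (rule eventually_mono) (simp add: Fin)
    next
      case Omega
      show ?thesis using ob[OF i Omega, of 0] by (rule eventually_mono) (simp add: Omega)
    qed
  qed
  then obtain K where K: "\<And>k. k \<ge> K \<Longrightarrow> \<forall>i\<in>{1..n}. (\<forall>z. p (2*i) = Fin z \<longrightarrow> z \<le> X i k) \<and> (p (2*i) = Omega \<longrightarrow> 0 < X i k)"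
    unfolding eventually_sequentially by blast
  define S where "S = {K..}"
  define F where "F = (\<lambda>i k. - dotp (r i) (a k)) ` {i\<in>{1..n}. p (2*i - 1) \<noteq> Omega} \<union> (\<lambda>i k. X i k) ` {1..n}"
  define g where "g k = map (\<lambda>j. (dotp (u j) (a k) mod e j, dotp (v j) (a k) mod e j)) [1..<Suc m]" for k
  have finF: "finite F" unfolding F_def by auto
  have infS: "infinite S" unfolding S_def infinite_nat_iff_unbounded_le
    by (intro allI, rule_tac x="max m K" in exI) auto
  have BF: "\<forall>f\<in>F. \<exists>B. \<forall>k\<in>S. B \<le> f k"
  proof
    fix f assume "f \<in> F"
    then consider (r) i where "i \<in> {1..n}" "p (2*i - 1) \<noteq> Omega" "f = (\<lambda>k. - dotp (r i) (a k))"
      | (s) i where "i \<in> {1..n}" "f = X i"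
      unfolding F_def by auto
    then show "\<exists>B. \<forall>k\<in>S. B \<le> f k"
    proof cases
      case r
      then obtain z where z: "p (2*i - 1) = Fin z" by (cases "p (2*i - 1)") auto
      show ?thesis using rb[OF r(1) z] r(3) by (intro exI[of _ "-z"]) auto
    next
      case s
      show ?thesis
      proof (cases "p (2*i)")
        case (Fin z)
        have "\<forall>k\<in>S. z \<le> f k"
        proof
          fix k assume "k \<in> S"
          hence "k \<ge> K" unfolding S_def by simp
          from K[OF this] s(1) Fin have "z \<le> X i k" by blast
          thus "z \<le> f k" using s(2) by simp
        qed
        thus ?thesis by blast
      next
        case Omega
        have "\<forall>k\<in>S. 0 \<le> f k"
        proof
          fix k assume "k \<in> S"
          hence "k \<ge> K" unfolding S_def by simp
          from K[OF this] s(1) Omega have "0 < X i k" by blast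
          thus "0 \<le> f k" using s(2) by simp
        qed
        thus ?thesis by blast
      qed
    qed
  qed
  have fing: "finite (g ` S)"
  proof -
    define A where "A = (\<Union>j\<in>{1..m}. {0..<e j} \<times> {0..<e j})"
    have finA: "finite A" unfolding A_def
      by (intro finite_UN_I finite_atLeastAtMost finite_cartesian_product finite_atLeastLessThan_int)
    have sub: "g ` S \<subseteq> {xs. set xs \<subseteq> A \<and> length xs = m}"
    proof
      fix xs assume "xs \<in> g ` S"
      then obtain k where xs: "xs = g k" by auto
      have "set (g k) \<subseteq> A"
      proof
        fix y assume "y \<in> set (g k)"
        then obtain j where j0: "j \<in> set [1..<Suc m]" "y = (dotp (u j) (a k) mod e j, dotp (v j) (a k) mod e j)"
          unfolding g_def by (simp only: set_map image_iff) blast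
        hence j: "j \<in> {1..m}" by auto
        have ej: "e j > 0" using e_pos j by auto
        have "y \<in> {0..<e j} \<times> {0..<e j}" using j0(2) ej by simp
        thus "y \<in> A" unfolding A_def using j by blast
      qed
      moreover have "length (g k) = m" unfolding g_def by simp
      ultimately show "xs \<in> {xs. set xs \<subseteq> A \<and> length xs = m}" unfolding xs by simp
    qed
    show ?thesis by (rule finite_subset[OF sub finite_lists_length_eq[OF finA]])
  qed
  obtain S' where S': "S' \<subseteq> S" "infinite S'"
    "\<forall>k\<in>S'. \<forall>l\<in>S'. k < l \<longrightarrow> (\<forall>f\<in>F. f k \<le> f l) \<and> g k = g l"
    using multi_mono[OF finF infS BF fing] by blast
  obtain k where k: "k \<in> S'" using S'(2) by (metis finite.emptyI ex_in_conv)
  have "eventually (\<lambda>l. \<forall>i\<in>{1..n}. p (2*i) = Omega \<longrightarrow> X i k < X i l) sequentially"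
    using ob by (intro eventually_ball_finite) auto
  then obtain N where N: "\<And>l. l \<ge> N \<Longrightarrow> \<forall>i\<in>{1..n}. p (2*i) = Omega \<longrightarrow> X i k < X i l"
    unfolding eventually_sequentially by blast
  obtain l where l: "l \<in> S'" "l > max k N" using S'(2) unfolding infinite_nat_iff_unbounded by blast
  have kl: "k < l" using l by simp
  have mono: "\<forall>f\<in>F. f k \<le> f l" and geq: "g k = g l" using S'(3) k l(1) kl by auto
  have kK: "k \<ge> K" using k S'(1) unfolding S_def by auto
  have congs: "e j dvd dotp (u j) (a l) - dotp (u j) (a k) \<and> e j dvd dotp (v j) (a l) - dotp (v j) (a k)"
    if j: "j \<in> {1..m}" for j
  proof -
    have jj: "j - 1 < length [1..<Suc m]" "[1..<Suc m] ! (j - 1) = j" using j by (auto simp del: upt_Suc)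
    have "g k ! (j - 1) = g l ! (j - 1)" using geq by simp
    hence "(dotp (u j) (a k) mod e j, dotp (v j) (a k) mod e j) = (dotp (u j) (a l) mod e j, dotp (v j) (a l) mod e j)"
      unfolding g_def using jj by (simp only: nth_map)
    thus ?thesis by (simp add: mod_eq_dvd_iff dvd_diff_commute)
  qed
  show "\<exists>a0 a :: 'd \<Rightarrow> int. a \<noteq> (\<lambda>_. 0) \<and>
       (\<forall>i\<in>{1..n}. \<forall>z. p (2*i - 1) = Fin z \<longrightarrow> dotp (r i) a0 \<le> z \<and> dotp (r i) a \<le> 0) \<and>
       (\<forall>i\<in>{1..n}. \<forall>z. p (2*i) = Fin z \<longrightarrow>
          z \<le> dotp (s i) a0 + dotp (t i) c + h i \<and> dotp (s i) a \<ge> 0) \<and>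
       (\<forall>i\<in>{1..n}. p (2*i) = Omega \<longrightarrow> dotp (s i) a > 0) \<and>
       (\<forall>j\<in>{1..m}.
          rel_mod (eq j) (e j) (dotp (u j) a0) (dotp (v j) (\<lambda>k. a0 k + a k) + dotp (w j) c + d j) \<and>
          e j dvd dotp (u j) a \<and> e j dvd dotp (v j) a)"
  proof (rule exI[of _ "a k"], rule exI[of _ "\<lambda>x. a l x - a k x"], intro conjI ballI allI impI)
    show "(\<lambda>x. a l x - a k x) \<noteq> (\<lambda>_. 0)"
    proof
      assume h: "(\<lambda>x. a l x - a k x) = (\<lambda>_. 0)"
      have "a l x = a k x" for x using fun_cong[OF h, of x] by simp
      hence "a l = a k" by blast
      thus False using inj kl unfolding inj_def by auto
    qed
  next
    fix i z assume i: "i \<in> {1..n}" and z: "p (2*i - 1) = Fin z"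
    show "dotp (r i) (a k) \<le> z" using rb[OF i z] .
    have "(\<lambda>k. - dotp (r i) (a k)) \<in> F" unfolding F_def using i z by auto
    from mono[rule_format, OF this] have "- dotp (r i) (a k) \<le> - dotp (r i) (a l)" .
    thus "dotp (r i) (\<lambda>x. a l x - a k x) \<le> 0" by (simp add: dotp_diff)
  next
    fix i z assume i: "i \<in> {1..n}" and z: "p (2*i) = Fin z"
    show "z \<le> dotp (s i) (a k) + dotp (t i) c + h i" using K[OF kK] i z unfolding X_def by auto
    have "X i \<in> F" unfolding F_def using i by auto
    from mono[rule_format, OF this] have "X i k \<le> X i l" .
    thus "dotp (s i) (\<lambda>x. a l x - a k x) \<ge> 0" by (simp add: dotp_diff X_def)
  next
    fix i assume i: "i \<in> {1..n}" and o: "p (2*i) = Omega"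
    have "X i k < X i l" using N[of l] l i o by auto
    thus "dotp (s i) (\<lambda>x. a l x - a k x) > 0" by (simp add: dotp_diff X_def)
  next
    fix j assume j: "j \<in> {1..m}"
    have "(\<lambda>x. a k x + (a l x - a k x)) = a l" by auto
    thus "rel_mod (eq j) (e j) (dotp (u j) (a k)) (dotp (v j) (\<lambda>x. a k x + (a l x - a k x)) + dotp (w j) c + d j)"
      using md[rule_format, of k l j] kl j by simp
    show "e j dvd dotp (u j) (\<lambda>x. a l x - a k x)" using congs[OF j] by (simp add: dotp_diff)
    show "e j dvd dotp (v j) (\<lambda>x. a l x - a k x)" using congs[OF j] by (simp add: dotp_diff)
  qed
next
  assume "\<exists>a0 a :: 'd \<Rightarrow> int. a \<noteq> (\<lambda>_. 0) \<and>
       (\<forall>i\<in>{1..n}. \<forall>z. p (2*i - 1) = Fin z \<longrightarrow> dotp (r i) a0 \<le> z \<and> dotp (r i) a \<le> 0) \<and>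
       (\<forall>i\<in>{1..n}. \<forall>z. p (2*i) = Fin z \<longrightarrow>
          z \<le> dotp (s i) a0 + dotp (t i) c + h i \<and> dotp (s i) a \<ge> 0) \<and>
       (\<forall>i\<in>{1..n}. p (2*i) = Omega \<longrightarrow> dotp (s i) a > 0) \<and>
       (\<forall>j\<in>{1..m}.
          rel_mod (eq j) (e j) (dotp (u j) a0) (dotp (v j) (\<lambda>k. a0 k + a k) + dotp (w j) c + d j) \<and>
          e j dvd dotp (u j) a \<and> e j dvd dotp (v j) a)"
  then obtain a0 a :: "'d \<Rightarrow> int" where nz: "a \<noteq> (\<lambda>_. 0)"
    and c1: "\<forall>i\<in>{1..n}. \<forall>z. p (2*i - 1) = Fin z \<longrightarrow> dotp (r i) a0 \<le> z \<and> dotp (r i) a \<le> 0"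
    and c2: "\<forall>i\<in>{1..n}. \<forall>z. p (2*i) = Fin z \<longrightarrow>
          z \<le> dotp (s i) a0 + dotp (t i) c + h i \<and> dotp (s i) a \<ge> 0"
    and c3: "\<forall>i\<in>{1..n}. p (2*i) = Omega \<longrightarrow> dotp (s i) a > 0"
    and c4: "\<forall>j\<in>{1..m}.
          rel_mod (eq j) (e j) (dotp (u j) a0) (dotp (v j) (\<lambda>k. a0 k + a k) + dotp (w j) c + d j) \<and>
          e j dvd dotp (u j) a \<and> e j dvd dotp (v j) a"
    by blast
  define b :: "nat \<Rightarrow> 'd \<Rightarrow> int" where "b = (\<lambda>k x. a0 x + int k * a x)"
  have db: "dotp x (b k) = dotp x a0 + int k * dotp x a" for x k
    unfolding b_def by (rule dotp_lin)
  obtain x0 where x0: "a x0 \<noteq> 0" using nz by auto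
  have I: "inj b"
  proof (rule injI)
    fix k l assume "b k = b l"
    hence "b k x0 = b l x0" by simp
    hence "int k * a x0 = int l * a x0" unfolding b_def by simp
    thus "k = l" using x0 by simp
  qed
  have R: "\<forall>k l j. k < l \<and> j \<in> {1..m} \<longrightarrow>
        rel_mod (eq j) (e j) (dotp (u j) (b k)) (dotp (v j) (b l) + dotp (w j) c + d j)"
  proof (intro allI impI)
    fix k l :: nat and j assume kl: "k < l \<and> j \<in> {1..m}"
    hence j: "j \<in> {1..m}" by simp
    have dvu: "e j dvd dotp (u j) a" and dvv: "e j dvd dotp (v j) a" using c4 j by auto
    have R: "rel_mod (eq j) (e j) (dotp (u j) a0) (dotp (v j) a0 + dotp (v j) a + dotp (w j) c + d j)"
      using c4 j by (simp add: dotp_add)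
    define D0 where "D0 = dotp (u j) a0 - (dotp (v j) a0 + dotp (v j) a + dotp (w j) c + d j)"
    define Q where "Q = int k * dotp (u j) a - (int l - 1) * dotp (v j) a"
    have dQ: "e j dvd Q" unfolding Q_def using dvu dvv by simp
    have eqD: "dotp (u j) (b k) - (dotp (v j) (b l) + dotp (w j) c + d j) = D0 + Q"
      unfolding D0_def Q_def db by (simp add: algebra_simps)
    have iff: "e j dvd D0 + Q \<longleftrightarrow> e j dvd D0" using dQ by (simp add: dvd_add_left_iff)
    have R': "if eq j then e j dvd D0 else \<not> e j dvd D0" using R unfolding rel_mod_def D0_def .
    show "rel_mod (eq j) (e j) (dotp (u j) (b k)) (dotp (v j) (b l) + dotp (w j) c + d j)"
      unfolding rel_mod_def eqD using iff R' by simp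
  qed
  have L: "\<forall>i\<in>{1..n}.
        (SUP k. ereal (real_of_int (dotp (r i) (b k)))) \<le> zo_ereal (p (2*i - 1)) \<and>
        zo_ereal (p (2*i)) \<le> liminf (\<lambda>k. ereal (real_of_int (dotp (s i) (b k) + dotp (t i) c + h i)))"
  proof
    fix i assume i: "i \<in> {1..n}"
    show "(SUP k. ereal (real_of_int (dotp (r i) (b k)))) \<le> zo_ereal (p (2*i - 1)) \<and>
        zo_ereal (p (2*i)) \<le> liminf (\<lambda>k. ereal (real_of_int (dotp (s i) (b k) + dotp (t i) c + h i)))"
    proof
      show "(SUP k. ereal (real_of_int (dotp (r i) (b k)))) \<le> zo_ereal (p (2*i - 1))"
      proof (cases "p (2*i - 1)")
        case (Fin z)
        have z: "dotp (r i) a0 \<le> z" "dotp (r i) a \<le> 0" using c1 i Fin by auto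
        show ?thesis
        proof (rule SUP_least)
          fix k :: nat
          have "int k * dotp (r i) a \<le> 0" using z(2) by (simp add: mult_nonneg_nonpos)
          hence "dotp (r i) (b k) \<le> z" using z(1) db by simp
          thus "ereal (real_of_int (dotp (r i) (b k))) \<le> zo_ereal (p (2*i - 1))" using Fin by simp
        qed
      next
        case Omega
        then show ?thesis by simp
      qed
    next
      show "zo_ereal (p (2*i)) \<le> liminf (\<lambda>k. ereal (real_of_int (dotp (s i) (b k) + dotp (t i) c + h i)))"
      proof (cases "p (2*i)")
        case (Fin z)
        have z: "z \<le> dotp (s i) a0 + dotp (t i) c + h i" "dotp (s i) a \<ge> 0" using c2 i Fin by auto
        show ?thesis unfolding Fin
        proof (rule Liminf_bounded, rule always_eventually, rule allI)
          fix k :: nat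
          have "int k * dotp (s i) a \<ge> 0" using z(2) by simp
          hence "z \<le> dotp (s i) (b k) + dotp (t i) c + h i" using z(1) db by simp
          thus "zo_ereal (Fin z) \<le> ereal (real_of_int (dotp (s i) (b k) + dotp (t i) c + h i))" by simp
        qed
      next
        case Omega
        have sa: "dotp (s i) a \<ge> 1" using c3 i Omega by auto
        define base where "base = dotp (s i) a0 + dotp (t i) c + h i"
        show ?thesis unfolding Omega zo_ereal.simps
        proof (subst le_Liminf_iff, intro allI impI)
          fix y :: ereal assume "y < \<infinity>"
          have "\<exists>R. y < ereal R"
          proof (cases y)
            case (real r)
            then show ?thesis by (intro exI[of _ "r + 1"]) simp
          next
            case PInf
            with \<open>y < \<infinity>\<close> show ?thesis by simp
          next
            case MInf
            then show ?thesis by (intro exI[of _ 0]) simp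
          qed
          then obtain R where R: "y < ereal R" by blast
          define N where "N = nat \<lceil>R - real_of_int base\<rceil> + 1"
          show "eventually (\<lambda>k. y < ereal (real_of_int (dotp (s i) (b k) + dotp (t i) c + h i))) sequentially"
            unfolding eventually_sequentially
          proof (intro exI[of _ N] allI impI)
            fix k assume k: "N \<le> k"
            have "int k * 1 \<le> int k * dotp (s i) a" using sa by (intro mult_left_mono) auto
            hence "base + int k \<le> dotp (s i) (b k) + dotp (t i) c + h i" unfolding base_def db by simp
            hence "real_of_int (base + int k) \<le> real_of_int (dotp (s i) (b k) + dotp (t i) c + h i)"
              by (simp only: of_int_le_iff)
            hence "real_of_int base + real k \<le> real_of_int (dotp (s i) (b k) + dotp (t i) c + h i)"
              by simp
            moreover have "real N \<le> real k" using k by simp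
            moreover have "R - real_of_int base < real N"
              using real_nat_ceiling_ge[of "R - real_of_int base"] unfolding N_def by simp
            ultimately have "R < real_of_int (dotp (s i) (b k) + dotp (t i) c + h i)" by linarith
            hence "ereal R < ereal (real_of_int (dotp (s i) (b k) + dotp (t i) c + h i))" by simp
            from R this show "y < ereal (real_of_int (dotp (s i) (b k) + dotp (t i) c + h i))"
              by (rule less_trans)
          qed
        qed
      qed
    qed
  qed
  have "compatible n m r s t h u v w d e eq p c b"
    unfolding compatible_def by (intro conjI I R L)
  thus "\<exists>a :: nat \<Rightarrow> 'd \<Rightarrow> int. compatible n m r s t h u v w d e eq p c a" by blast
qed

end
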